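(* If a nonempty set of candidates start the leader election algorithm, then the algorithm eventually terminates and exactly one candidate is known as the leader.
   Context: A broadcast network is modeled as a connected graph G(V,E) with n nodes; two nodes are joined by a (bidirectional) edge iff they hear each other's transmissions, and a transmitted message is heard by all neighbors of the sender. Messages arrive reliably, without errors, in FIFO order after arbitrary finite delay; there are no failures or topology changes; each node knows its number of neighbors. In the leader election algorithm the nodes are partitioned into fragments, each consisting of an active candidate node and its supporting nodes. Each fragment F has an identity id(F) = (id(F).size, id(F).identity) (its size and the candidate's identification number), ordered lexicographically: id(F1) > id(F2) iff id(F1).size > id(F2).size, or the sizes are equal and id(F1).identity > id(F2).identity. An edge is internal if it joins nodes of the same fragment and external otherwise; an external edge between F1 and F2 with id(F1) > id(F2) is directed from F1 to F2 (outgoing for F1, incoming for F2). Initially every node is a fragment of size 1 in state wait. The fragment-level (general) algorithm is: (1) a fragment enters (or stays in) state wait when it has at least one outgoing edge; (2) a fragment in wait moves to state work when all its external edges are incoming; in work it incurs a finite positive delay (workdelay) during which it counts its current number of nodes new_size and compares it to the size of its maximal neighbor fragment F': if new_size > X · id(F').size (X > 1 a parameter), it sets its size to new_size, all its external edges become outgoing, and it returns to wait; otherwise it ceases to exist and joins F' (its edges to F' become internal; F' keeps its size and identity); (3) a fragment with no external edges is in state leader. State transitions themselves take no time. *)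

theory Defs
  imports Complex_Main
begin

text \<open>Fragment-level model of the leader election algorithm on a broadcast
network G = (V, E).  A configuration records, for every node, the candidate
node of the fragment it belongs to (cand), and, for every candidate, the size
field of its fragment identity and the state of its fragment.  Each step of the asynchronous system is one
state transition of a single fragment; arbitrary interleavings model the
arbitrary finite delays (including workdelay).\<close>

datatype fstate = Wait | Work | Leader

record 'v config =
  cand :: "'v \<Rightarrow> 'v"
  fsize :: "'v \<Rightarrow> nat"
  stat :: "'v \<Rightarrow> fstate"

definition members :: "'v set \<Rightarrow> 'v config \<Rightarrow> 'v \<Rightarrow> 'v set" where
  "members V s c = {v \<in> V. cand s v = c}"

definition is_cand :: "'v set \<Rightarrow> 'v config \<Rightarrow> 'v \<Rightarrow> bool" where
  "is_cand V s c \<longleftrightarrow> c \<in> V \<and> cand s c = c"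

definition fid :: "('v \<Rightarrow> nat) \<Rightarrow> 'v config \<Rightarrow> 'v \<Rightarrow> nat \<times> nat" where
  "fid ident s c = (fsize s c, ident c)"

definition id_less :: "nat \<times> nat \<Rightarrow> nat \<times> nat \<Rightarrow> bool" where
  "id_less a b \<longleftrightarrow> fst a < fst b \<or> (fst a = fst b \<and> snd a < snd b)"

definition frag_adj :: "'v set \<Rightarrow> ('v \<Rightarrow> 'v \<Rightarrow> bool) \<Rightarrow> 'v config \<Rightarrow> 'v \<Rightarrow> 'v \<Rightarrow> bool" where
  "frag_adj V E s c d \<longleftrightarrow> c \<noteq> d \<and>
     (\<exists>u v. u \<in> V \<and> v \<in> V \<and> E u v \<and> cand s u = c \<and> cand s v = d)"

definition has_external :: "'v set \<Rightarrow> ('v \<Rightarrow> 'v \<Rightarrow> bool) \<Rightarrow> 'v config \<Rightarrow> 'v \<Rightarrow> bool" where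
  "has_external V E s c \<longleftrightarrow> (\<exists>d. frag_adj V E s c d)"

definition has_outgoing :: "'v set \<Rightarrow> ('v \<Rightarrow> 'v \<Rightarrow> bool) \<Rightarrow> ('v \<Rightarrow> nat) \<Rightarrow> 'v config \<Rightarrow> 'v \<Rightarrow> bool" where
  "has_outgoing V E ident s c \<longleftrightarrow>
     (\<exists>d. frag_adj V E s c d \<and> id_less (fid ident s d) (fid ident s c))"

definition all_incoming :: "'v set \<Rightarrow> ('v \<Rightarrow> 'v \<Rightarrow> bool) \<Rightarrow> ('v \<Rightarrow> nat) \<Rightarrow> 'v config \<Rightarrow> 'v \<Rightarrow> bool" where
  "all_incoming V E ident s c \<longleftrightarrow>
     (\<forall>d. frag_adj V E s c d \<longrightarrow> id_less (fid ident s c) (fid ident s d))"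

definition max_neighbor :: "'v set \<Rightarrow> ('v \<Rightarrow> 'v \<Rightarrow> bool) \<Rightarrow> ('v \<Rightarrow> nat) \<Rightarrow> 'v config \<Rightarrow> 'v \<Rightarrow> 'v \<Rightarrow> bool" where
  "max_neighbor V E ident s c d \<longleftrightarrow> frag_adj V E s c d \<and>
     (\<forall>d'. frag_adj V E s c d' \<longrightarrow> d' = d \<or> id_less (fid ident s d') (fid ident s d))"

inductive step :: "'v set \<Rightarrow> ('v \<Rightarrow> 'v \<Rightarrow> bool) \<Rightarrow> ('v \<Rightarrow> nat) \<Rightarrow> real \<Rightarrow>
    'v config \<Rightarrow> 'v config \<Rightarrow> bool"
  for V E ident X where
  to_work: "\<lbrakk> is_cand V s c; stat s c = Wait; has_external V E s c;
              all_incoming V E ident s c \<rbrakk>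
            \<Longrightarrow> step V E ident X s (s\<lparr>stat := (stat s)(c := Work)\<rparr>)"
| to_wait: "\<lbrakk> is_cand V s c; stat s c = Work; has_outgoing V E ident s c \<rbrakk>
            \<Longrightarrow> step V E ident X s (s\<lparr>stat := (stat s)(c := Wait)\<rparr>)"
| grow: "\<lbrakk> is_cand V s c; stat s c = Work; max_neighbor V E ident s c d;
           real (card (members V s c)) > X * real (fsize s d) \<rbrakk>
         \<Longrightarrow> step V E ident X s
               (s\<lparr>fsize := (fsize s)(c := card (members V s c)),
                  stat := (stat s)(c := Wait)\<rparr>)"
| join: "\<lbrakk> is_cand V s c; stat s c = Work; max_neighbor V E ident s c d;
           \<not> real (card (members V s c)) > X * real (fsize s d) \<rbrakk>
         \<Longrightarrow> step V E ident X s
               (s\<lparr>cand := (\<lambda>v. if cand s v = c then d else cand s v)\<rparr>)"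
| to_leader: "\<lbrakk> is_cand V s c; stat s c \<noteq> Leader; \<not> has_external V E s c \<rbrakk>
            \<Longrightarrow> step V E ident X s (s\<lparr>stat := (stat s)(c := Leader)\<rparr>)"

definition init :: "'v config" where
  "init = \<lparr>cand = (\<lambda>v. v), fsize = (\<lambda>_. 1), stat = (\<lambda>_. Wait)\<rparr>"

end

theory Submission
  imports Defs
begin

lemma id_less_irrefl: "\<not> id_less a a" by (auto simp: id_less_def)
lemma id_less_trans: "id_less a b \<Longrightarrow> id_less b c \<Longrightarrow> id_less a c" by (auto simp: id_less_def)
lemma id_less_asym: "id_less a b \<Longrightarrow> \<not> id_less b a" by (auto simp: id_less_def)
lemma id_less_total: "a \<noteq> b \<Longrightarrow> id_less a b \<or> id_less b a"
  by (cases a; cases b) (auto simp: id_less_def)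

lemma fid_neq: "inj_on ident V \<Longrightarrow> c \<in> V \<Longrightarrow> d \<in> V \<Longrightarrow> c \<noteq> d \<Longrightarrow> fid ident s c \<noteq> fid ident s d"
  by (auto simp: fid_def inj_on_def)

definition good :: "'v set \<Rightarrow> 'v config \<Rightarrow> bool" where
  "good V s \<longleftrightarrow> (\<forall>v\<in>V. cand s v \<in> V \<and> cand s (cand s v) = cand s v) \<and> (\<forall>v. 1 \<le> fsize s v)
     \<and> (\<forall>c. is_cand V s c \<longrightarrow> fsize s c \<le> card (members V s c))
     \<and> (\<forall>c. is_cand V s c \<and> stat s c = Leader \<longrightarrow> (\<forall>v\<in>V. cand s v = c))"

lemma good_init: "finite V \<Longrightarrow> good V init"
proof -
  assume f: "finite V"
  have "\<And>c. c \<in> V \<Longrightarrow> members V init c = {c}" by (auto simp: members_def init_def)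
  then show ?thesis by (auto simp: good_def init_def is_cand_def)
qed

lemma conn_lemma:
  assumes g: "good V s" and inV: "\<And>u v. E u v \<Longrightarrow> u \<in> V \<and> v \<in> V"
    and connected: "\<And>u v. u \<in> V \<Longrightarrow> v \<in> V \<Longrightarrow> E\<^sup>*\<^sup>* u v"
    and c: "is_cand V s c" and ne: "\<not> has_external V E s c"
  shows "\<forall>v\<in>V. cand s v = c"
proof
  fix v assume v: "v \<in> V"
  have "E\<^sup>*\<^sup>* c v" using connected c v by (auto simp: is_cand_def)
  then show "cand s v = c"
  proof (induction rule: rtranclp_induct)
    case base then show ?case using c by (simp add: is_cand_def)
  next
    case (step u w)
    have "u \<in> V" "w \<in> V" using inV step(2) by auto
    then show ?case using step ne unfolding has_external_def frag_adj_def by metis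
  qed
qed

lemma good_statonly:
  assumes g: "good V s" and "cand s' = cand s" and "fsize s' = fsize s"
   and "\<And>c. is_cand V s c \<Longrightarrow> stat s' c = Leader \<Longrightarrow> stat s c = Leader \<or> (\<forall>v\<in>V. cand s v = c)"
  shows "good V s'"
proof -
  have m: "members V s' = members V s" "is_cand V s' = is_cand V s"
    using assms(2) by (auto simp: members_def is_cand_def fun_eq_iff)
  show ?thesis using g assms(2,3,4) unfolding good_def m by metis
qed

lemma step_good:
  assumes st: "step V E ident X s s'" and g: "good V s" and finV: "finite V"
    and inV: "\<And>u v. E u v \<Longrightarrow> u \<in> V \<and> v \<in> V"
    and connected: "\<And>u v. u \<in> V \<Longrightarrow> v \<in> V \<Longrightarrow> E\<^sup>*\<^sup>* u v"
  shows "good V s'"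
  using st
proof cases
  case (to_work c)
  then show ?thesis using g by (intro good_statonly[OF g]) (auto split: if_splits)
next
  case (to_wait c)
  then show ?thesis using g by (intro good_statonly[OF g]) (auto split: if_splits)
next
  case (grow c d)
  have cV: "c \<in> V" "cand s c = c" using grow by (auto simp: is_cand_def)
  have "c \<in> members V s c" using cV by (auto simp: members_def)
  moreover have "finite (members V s c)" using finV by (auto simp: members_def)
  ultimately have ge: "card (members V s c) \<ge> 1"
    by (metis One_nat_def Suc_leI card_gt_0_iff empty_iff)
  have m: "members V s' = members V s" "is_cand V s' = is_cand V s"
    using grow by (auto simp: members_def is_cand_def fun_eq_iff)
  have "\<forall>v\<in>V. cand s' v \<in> V \<and> cand s' (cand s' v) = cand s' v" using g grow by (simp add: good_def)
  moreover have "\<forall>v. 1 \<le> fsize s' v" using g grow ge by (simp add: good_def)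
  moreover have "\<forall>x. is_cand V s' x \<longrightarrow> fsize s' x \<le> card (members V s' x)"
    using g grow unfolding m by (simp add: good_def)
  moreover have "\<forall>x. is_cand V s' x \<and> stat s' x = Leader \<longrightarrow> (\<forall>v\<in>V. cand s' v = x)"
    using g grow unfolding m by (simp add: good_def)
  ultimately show ?thesis unfolding good_def by blast
next
  case (join c d)
  have cV: "c \<in> V" "cand s c = c" using join by (auto simp: is_cand_def)
  obtain u w where uw: "u \<in> V" "w \<in> V" "cand s w = d" "d \<noteq> c"
    using join(4) by (auto simp: max_neighbor_def frag_adj_def)
  have dV: "d \<in> V" "cand s d = d" using g uw unfolding good_def by metis+
  have cs': "cand s' = (\<lambda>v. if cand s v = c then d else cand s v)" using join by simp
  have c1: "\<forall>v\<in>V. cand s' v \<in> V \<and> cand s' (cand s' v) = cand s' v"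
    unfolding cs' using g dV uw unfolding good_def by auto
  have candc: "is_cand V s' x \<Longrightarrow> is_cand V s x \<and> x \<noteq> c" for x
    using cs' dV uw unfolding is_cand_def by (auto split: if_splits)
  have c3: "fsize s' x \<le> card (members V s' x)" if "is_cand V s' x" for x
  proof -
    have x: "is_cand V s x" "x \<noteq> c" using candc that by auto
    have "members V s x \<subseteq> members V s' x" using cs' x by (auto simp: members_def)
    moreover have "finite (members V s' x)" using finV by (auto simp: members_def)
    ultimately have "card (members V s x) \<le> card (members V s' x)" by (rule card_mono[rotated])
    moreover have "fsize s x \<le> card (members V s x)" using g x unfolding good_def by blast
    ultimately show ?thesis using join by simp
  qed
  have c4: "\<forall>v\<in>V. cand s' v = x" if "is_cand V s' x" "stat s' x = Leader" for x
  proof -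
    have x: "is_cand V s x" "x \<noteq> c" using candc that by auto
    have "stat s x = Leader" using that join by simp
    then have "\<forall>v\<in>V. cand s v = x" using g x unfolding good_def by blast
    then show ?thesis using cV x by auto
  qed
  have "\<forall>v. 1 \<le> fsize s' v" using g join by (simp add: good_def)
  then show ?thesis using c1 c3 c4 unfolding good_def by blast
next
  case (to_leader c)
  have "\<forall>v\<in>V. cand s v = c" using conn_lemma[OF g inV connected] to_leader by blast
  then show ?thesis using to_leader by (intro good_statonly[OF g]) (auto split: if_splits)
qed

definition cands :: "'v set \<Rightarrow> 'v config \<Rightarrow> 'v set" where
  "cands V s = {c\<in>V. cand s c = c}"
definition szs :: "'v set \<Rightarrow> 'v config \<Rightarrow> nat" where
  "szs V s = sum (fsize s) (cands V s)"
definition pos :: "'v set \<Rightarrow> ('v \<Rightarrow> 'v \<Rightarrow> bool) \<Rightarrow> ('v \<Rightarrow> nat) \<Rightarrow> 'v config \<Rightarrow> 'v \<Rightarrow> bool" where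
  "pos V E ident s c \<longleftrightarrow> (has_external V E s c \<and> \<not> has_outgoing V E ident s c \<and> stat s c = Wait)
     \<or> (has_outgoing V E ident s c \<and> stat s c = Work) \<or> (\<not> has_external V E s c \<and> stat s c \<noteq> Leader)"
definition pot :: "'v set \<Rightarrow> ('v \<Rightarrow> 'v \<Rightarrow> bool) \<Rightarrow> ('v \<Rightarrow> nat) \<Rightarrow> 'v config \<Rightarrow> nat" where
  "pot V E ident s = card {c \<in> cands V s. pos V E ident s c}"
definition mu :: "'v set \<Rightarrow> ('v \<Rightarrow> 'v \<Rightarrow> bool) \<Rightarrow> ('v \<Rightarrow> nat) \<Rightarrow> 'v config \<Rightarrow> nat \<times> nat \<times> nat" where
  "mu V E ident s = (card (cands V s), card V * card V - szs V s, pot V E ident s)"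
definition RR :: "((nat \<times> nat \<times> nat) \<times> (nat \<times> nat \<times> nat)) set" where
  "RR = less_than <*lex*> less_than <*lex*> less_than"

lemma wf_RR: "wf RR" unfolding RR_def by auto

lemma sz_bound:
  assumes g: "good V s" and finV: "finite V"
  shows "szs V s \<le> card V * card V"
proof -
  have "\<forall>c\<in>cands V s. fsize s c \<le> card V"
  proof
    fix c assume "c \<in> cands V s"
    then have "is_cand V s c" by (simp add: cands_def is_cand_def)
    then have "fsize s c \<le> card (members V s c)" using g by (simp add: good_def)
    also have "\<dots> \<le> card V" using finV by (intro card_mono) (auto simp: members_def)
    finally show "fsize s c \<le> card V" .
  qed
  then have "szs V s \<le> card (cands V s) * card V" unfolding szs_def
    using sum_bounded_above[of "cands V s" "fsize s" "card V"] by simp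
  also have "\<dots> \<le> card V * card V" using finV by (intro mult_right_mono card_mono) (auto simp: cands_def)
  finally show ?thesis .
qed

lemma statonly_dec:
  assumes finV: "finite V" and e1: "cand s' = cand s" and e2: "fsize s' = fsize s"
    and e3: "\<And>x. x \<noteq> c \<Longrightarrow> stat s' x = stat s x" and c: "c \<in> cands V s"
    and p: "pos V E ident s c" and np: "\<not> pos V E ident s' c"
  shows "(mu V E ident s', mu V E ident s) \<in> RR"
proof -
  have cs: "cands V s' = cands V s" using e1 by (simp add: cands_def)
  have sz: "szs V s' = szs V s" using cs e2 by (simp add: szs_def)
  have he: "has_external V E s' = has_external V E s"
    using e1 by (simp add: has_external_def frag_adj_def fun_eq_iff)
  have ho: "has_outgoing V E ident s' = has_outgoing V E ident s"
    using e1 e2 by (simp add: has_outgoing_def frag_adj_def fid_def fun_eq_iff)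
  have pe: "pos V E ident s' x = pos V E ident s x" if "x \<noteq> c" for x
    using e3[OF that] unfolding pos_def he ho by simp
  have "{x \<in> cands V s'. pos V E ident s' x} = {x \<in> cands V s. pos V E ident s x} - {c}"
    unfolding cs
  proof (rule set_eqI)
    fix x show "x \<in> {x \<in> cands V s. pos V E ident s' x} \<longleftrightarrow> x \<in> {x \<in> cands V s. pos V E ident s x} - {c}"
    proof (cases "x = c")
      case True then show ?thesis using np by simp
    next
      case False then show ?thesis using pe[OF False] by simp
    qed
  qed
  moreover have "finite {x \<in> cands V s. pos V E ident s x}" using finV by (simp add: cands_def)
  ultimately have "pot V E ident s' < pot V E ident s" unfolding pot_def
    using c p by (metis (mono_tags, lifting) card_Diff1_less mem_Collect_eq)
  then show ?thesis by (simp add: mu_def RR_def cs sz)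
qed

lemma cand_ext_ne: "has_outgoing V E ident s c \<Longrightarrow> has_external V E s c"
  by (auto simp: has_outgoing_def has_external_def)

lemma step_dec:
  assumes st: "step V E ident X s s'" and g: "good V s" and finV: "finite V"
    and inV: "\<And>u v. E u v \<Longrightarrow> u \<in> V \<and> v \<in> V"
    and connected: "\<And>u v. u \<in> V \<Longrightarrow> v \<in> V \<Longrightarrow> E\<^sup>*\<^sup>* u v"
    and ident_inj: "inj_on ident V" and X_gt: "X > 1"
  shows "(mu V E ident s', mu V E ident s) \<in> RR"
  using st
proof cases
  case (to_work c)
  have ho: "\<not> has_outgoing V E ident s c"
    using to_work(5) id_less_asym unfolding has_outgoing_def all_incoming_def by blast
  have c: "c \<in> cands V s" using to_work by (simp add: is_cand_def cands_def)
  have he': "has_external V E s' c = has_external V E s c" "has_outgoing V E ident s' c = has_outgoing V E ident s c"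
    using to_work(1) by (simp_all add: has_external_def has_outgoing_def frag_adj_def fid_def)
  show ?thesis
    by (rule statonly_dec[OF finV _ _ _ c]) (use to_work ho he' in \<open>auto simp: pos_def\<close>)
next
  case (to_wait c)
  have c: "c \<in> cands V s" using to_wait by (simp add: is_cand_def cands_def)
  have he': "has_external V E s' c = has_external V E s c" "has_outgoing V E ident s' c = has_outgoing V E ident s c"
    using to_wait(1) by (simp_all add: has_external_def has_outgoing_def frag_adj_def fid_def)
  show ?thesis
    by (rule statonly_dec[OF finV _ _ _ c]) (use to_wait he' cand_ext_ne[of V E ident s c] in \<open>auto simp: pos_def\<close>)
next
  case (grow c d)
  have c: "c \<in> cands V s" and cV: "c \<in> V" using grow by (simp_all add: is_cand_def cands_def)
  have g': "good V s'" using step_good[OF st g finV inV connected] .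
  have le: "fsize s c \<le> card (members V s c)" using g grow(2) unfolding good_def by blast
  show ?thesis
  proof (cases "fsize s c = card (members V s c)")
    case True
    have s'eq: "s' = s\<lparr>stat := (stat s)(c := Wait)\<rparr>"
      using grow(1) True by (cases s) (simp add: fun_upd_idem)
    have he': "has_external V E s' c = has_external V E s c" "has_outgoing V E ident s' c = has_outgoing V E ident s c"
      using s'eq by (simp_all add: has_external_def has_outgoing_def frag_adj_def fid_def)
    have ho: "has_outgoing V E ident s c"
    proof (rule ccontr)
      assume nho: "\<not> has_outgoing V E ident s c"
      have fa: "frag_adj V E s c d" using grow(4) by (simp add: max_neighbor_def)
      then obtain w where w: "w \<in> V" "cand s w = d" "d \<noteq> c" by (auto simp: frag_adj_def)
      have dV: "d \<in> V" using g w unfolding good_def by metis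
      have "\<not> id_less (fid ident s d) (fid ident s c)" using nho fa by (auto simp: has_outgoing_def)
      then have "id_less (fid ident s c) (fid ident s d)"
        using id_less_total fid_neq[OF ident_inj cV dV] w(3) by metis
      then have "fsize s c \<le> fsize s d" by (auto simp: id_less_def fid_def)
      moreover have "1 \<le> fsize s c" using g by (simp add: good_def)
      moreover have "real (card (members V s c)) > X * real (fsize s d)" using grow by simp
      ultimately have "real (fsize s c) > X * real (fsize s d)" "real (fsize s c) \<le> real (fsize s d)"
        "1 \<le> real (fsize s c)" using True by simp_all
      then show False using X_gt
        by (smt (verit, ccfv_SIG) mult_less_cancel_right2)
    qed
    show ?thesis
      by (rule statonly_dec[OF finV _ _ _ c]) (use s'eq he' ho cand_ext_ne[of V E ident s c] grow(3) in \<open>auto simp: pos_def\<close>)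
  next
    case False
    then have lt: "fsize s c < card (members V s c)" using le by simp
    have cs: "cands V s' = cands V s" using grow(1) by (simp add: cands_def)
    have "szs V s < szs V s'" unfolding szs_def cs
      by (rule sum_strict_mono_ex1) (use finV c lt grow(1) in \<open>auto simp: cands_def\<close>)
    moreover have "szs V s' \<le> card V * card V" using sz_bound[OF g' finV] .
    ultimately have "card V * card V - szs V s' < card V * card V - szs V s" by linarith
    then show ?thesis by (simp add: mu_def RR_def cs)
  qed
next
  case (join c d)
  have c: "c \<in> cands V s" using join by (simp add: is_cand_def cands_def)
  obtain w where w: "w \<in> V" "cand s w = d" "d \<noteq> c"
    using join(4) by (auto simp: max_neighbor_def frag_adj_def)
  have dV: "d \<in> V" "cand s d = d" using g w unfolding good_def by metis+
  have "cands V s' \<subseteq> cands V s - {c}" using join dV w by (auto simp: cands_def split: if_splits)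
  then have "card (cands V s') < card (cands V s)"
  proof -
    have "finite (cands V s)" using finV by (simp add: cands_def)
    moreover have "cands V s' \<subset> cands V s" using \<open>cands V s' \<subseteq> cands V s - {c}\<close> c by blast
    ultimately show ?thesis by (rule psubset_card_mono)
  qed
  then show ?thesis by (simp add: mu_def RR_def)
next
  case (to_leader c)
  have c: "c \<in> cands V s" using to_leader by (simp add: is_cand_def cands_def)
  have he': "has_external V E s' c = has_external V E s c" "has_outgoing V E ident s' c = has_outgoing V E ident s c"
    using to_leader(1) by (simp_all add: has_external_def has_outgoing_def frag_adj_def fid_def)
  show ?thesis
    by (rule statonly_dec[OF finV _ _ _ c]) (use to_leader he' cand_ext_ne in \<open>auto simp: pos_def\<close>)
qed

lemma fin_max:
  assumes "finite S" "S \<noteq> {}" "\<And>x. \<not> R x x" "\<And>x y z. R x y \<Longrightarrow> R y z \<Longrightarrow> R x z"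
  shows "\<exists>m\<in>S. \<forall>d\<in>S. \<not> R m d"
  using assms(1,2)
proof (induction S rule: finite_ne_induct)
  case (singleton x) then show ?case using assms(3) by auto
next
  case (insert x F)
  then obtain m where m: "m \<in> F" "\<forall>d\<in>F. \<not> R m d" by blast
  show ?case
  proof (cases "R m x")
    case True
    have "\<forall>d\<in>insert x F. \<not> R x d" using m True assms(3,4) by blast
    then show ?thesis by blast
  next
    case False
    then show ?thesis using m by blast
  qed
qed

theorem theorem2:
  fixes V :: "'v set" and E :: "'v \<Rightarrow> 'v \<Rightarrow> bool" and ident :: "'v \<Rightarrow> nat"
    and X :: real
  assumes finV: "finite V" and nonempty: "V \<noteq> {}"
    and sym: "\<And>u v. E u v \<Longrightarrow> E v u"
    and irrefl: "\<And>v. \<not> E v v"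
    and inV: "\<And>u v. E u v \<Longrightarrow> u \<in> V \<and> v \<in> V"
    and connected: "\<And>u v. u \<in> V \<Longrightarrow> v \<in> V \<Longrightarrow> E\<^sup>*\<^sup>* u v"
    and ident_inj: "inj_on ident V"
    and X_gt: "X > 1"
  shows "(\<nexists>f. f 0 = init \<and> (\<forall>i. step V E ident X (f i) (f (Suc i))))
       \<and> (\<forall>s. (step V E ident X)\<^sup>*\<^sup>* init s \<and> (\<nexists>s'. step V E ident X s s') \<longrightarrow>
            (\<exists>!c. is_cand V s c \<and> stat s c = Leader)
            \<and> (\<forall>c. is_cand V s c \<and> stat s c = Leader \<longrightarrow> (\<forall>v\<in>V. cand s v = c)))"
proof (intro conjI allI impI)
  show "\<nexists>f. f 0 = init \<and> (\<forall>i. step V E ident X (f i) (f (Suc i)))"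
  proof
    assume "\<exists>f. f 0 = init \<and> (\<forall>i. step V E ident X (f i) (f (Suc i)))"
    then obtain f where f0: "f 0 = init" and fs: "\<And>i. step V E ident X (f i) (f (Suc i))" by blast
    have gi: "good V (f i)" for i
    proof (induction i)
      case 0 then show ?case using f0 good_init[OF finV] by simp
    next
      case (Suc i) then show ?case using step_good[OF fs _ finV inV connected] by blast
    qed
    have dd: "\<forall>i. (mu V E ident (f (Suc i)), mu V E ident (f i)) \<in> RR"
      using step_dec[OF fs gi finV inV connected ident_inj X_gt] by blast
    have "\<exists>g. \<forall>i. (g (Suc i), g i) \<in> RR"
    proof
      show "\<forall>i. ((\<lambda>i. mu V E ident (f i)) (Suc i), (\<lambda>i. mu V E ident (f i)) i) \<in> RR" using dd by simp
    qed
    then show False using wf_RR unfolding wf_iff_no_infinite_down_chain by blast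
  qed
next
  fix s
  assume a: "(step V E ident X)\<^sup>*\<^sup>* init s \<and> (\<nexists>s'. step V E ident X s s')"
  then have termi: "\<And>s'. \<not> step V E ident X s s'" by blast
  have g: "good V s" using a
  proof -
    have "(step V E ident X)\<^sup>*\<^sup>* init s" using a by blast
    then show ?thesis
    proof (induction rule: rtranclp_induct)
      case base then show ?case using good_init[OF finV] .
    next
      case (step y z) then show ?case using step_good[OF _ _ finV inV connected] by blast
    qed
  qed
  have candV: "\<And>v. v \<in> V \<Longrightarrow> is_cand V s (cand s v)"
    using g unfolding good_def is_cand_def by blast
  have fincands: "finite (cands V s)" using finV by (simp add: cands_def)
  have noext: "\<not> has_external V E s c" if c0: "is_cand V s c0" "has_external V E s c0" for c0 c
  proof (rule ccontr)
    assume "\<not> \<not> has_external V E s c"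
    have "\<exists>m\<in>cands V s. \<forall>d\<in>cands V s. \<not> id_less (fid ident s d) (fid ident s m)"
      by (rule fin_max[OF fincands]) (use c0 in \<open>auto simp: cands_def is_cand_def id_less_irrefl intro: id_less_trans\<close>)
    then obtain m where m: "m \<in> cands V s" and mmin: "\<And>d. d \<in> cands V s \<Longrightarrow> \<not> id_less (fid ident s d) (fid ident s m)"
      by blast
    have mc: "is_cand V s m" and mV: "m \<in> V" using m by (auto simp: cands_def is_cand_def)
    have adjC: "d \<in> cands V s \<and> d \<noteq> x" if fa: "frag_adj V E s x d" for x d
    proof -
      obtain v where "v \<in> V" "cand s v = d" "x \<noteq> d" using fa unfolding frag_adj_def by blast
      then show ?thesis using candV by (auto simp: cands_def is_cand_def)
    qed
    have mext: "has_external V E s m"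
    proof (rule ccontr)
      assume "\<not> has_external V E s m"
      then have allm: "\<forall>v\<in>V. cand s v = m" using conn_lemma[OF g inV connected mc] by blast
      obtain d where "frag_adj V E s c0 d" using c0 by (auto simp: has_external_def)
      then obtain u v where "u \<in> V" "v \<in> V" "cand s u = c0" "cand s v = d" "c0 \<noteq> d"
        by (auto simp: frag_adj_def)
      then show False using allm by auto
    qed
    have ai: "all_incoming V E ident s m"
      unfolding all_incoming_def
    proof (intro allI impI)
      fix d assume "frag_adj V E s m d"
      then have d: "d \<in> cands V s" "d \<noteq> m" using adjC by auto
      then have "d \<in> V" by (simp add: cands_def)
      then have "fid ident s m \<noteq> fid ident s d" using fid_neq[OF ident_inj mV] d by metis
      then show "id_less (fid ident s m) (fid ident s d)" using id_less_total mmin[OF d(1)] by metis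
    qed
    show False
    proof (cases "stat s m")
      case Wait
      then have "step V E ident X s (s\<lparr>stat := (stat s)(m := Work)\<rparr>)"
        using mc mext ai by (intro step.to_work) blast+
      then show False using termi by blast
    next
      case Leader
      then have "\<forall>v\<in>V. cand s v = m" using g mc unfolding good_def by blast
      then show False using mext by (auto simp: has_external_def frag_adj_def)
    next
      case Work
      have finN: "finite {d. frag_adj V E s m d}"
        using fincands adjC by (metis (no_types, lifting) finite_subset mem_Collect_eq subsetI)
      have neN: "{d. frag_adj V E s m d} \<noteq> {}" using mext by (auto simp: has_external_def)
      obtain dm where dm: "frag_adj V E s m dm" and dmax: "\<And>d. frag_adj V E s m d \<Longrightarrow> \<not> id_less (fid ident s dm) (fid ident s d)"
        using fin_max[OF finN neN, of "\<lambda>x y. id_less (fid ident s x) (fid ident s y)"] id_less_irrefl id_less_trans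
        by (metis mem_Collect_eq)
      have mn: "max_neighbor V E ident s m dm"
        unfolding max_neighbor_def
      proof (intro conjI allI impI dm)
        fix d' assume d': "frag_adj V E s m d'"
        show "d' = dm \<or> id_less (fid ident s d') (fid ident s dm)"
        proof (cases "d' = dm")
          case False
          have "d' \<in> V" "dm \<in> V" using adjC[OF d'] adjC[OF dm] by (auto simp: cands_def)
          then have "fid ident s d' \<noteq> fid ident s dm" using fid_neq[OF ident_inj] False by metis
          then show ?thesis using id_less_total dmax[OF d'] by metis
        qed simp
      qed
      show False
      proof (cases "real (card (members V s m)) > X * real (fsize s dm)")
        case True
        then have "step V E ident X s (s\<lparr>fsize := (fsize s)(m := card (members V s m)),
                  stat := (stat s)(m := Wait)\<rparr>)"
          using mc Work mn by (intro step.grow) blast+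
        then show False using termi by blast
      next
        case False
        then have "step V E ident X s (s\<lparr>cand := (\<lambda>v. if cand s v = m then dm else cand s v)\<rparr>)"
          using mc Work mn by (intro step.join) blast+
        then show False using termi by blast
      qed
    qed
  qed
  obtain v0 where v0: "v0 \<in> V" using nonempty by blast
  define c where "c = cand s v0"
  have c: "is_cand V s c" using candV v0 c_def by blast
  have all: "\<forall>v\<in>V. cand s v = c"
    using conn_lemma[OF g inV connected c] noext c by blast
  have lead: "stat s c = Leader"
  proof (rule ccontr)
    assume "stat s c \<noteq> Leader"
    then have "step V E ident X s (s\<lparr>stat := (stat s)(c := Leader)\<rparr>)"
      using c noext by (intro step.to_leader) blast+
    then show False using termi by blast
  qed
  show "\<exists>!c. is_cand V s c \<and> stat s c = Leader"
  proof (rule ex1I[of _ c])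
    show "is_cand V s c \<and> stat s c = Leader" using c lead by blast
  next
    fix c' assume "is_cand V s c' \<and> stat s c' = Leader"
    then show "c' = c" using all unfolding is_cand_def by metis
  qed
next
  fix s c'
  assume a: "(step V E ident X)\<^sup>*\<^sup>* init s \<and> (\<nexists>s'. step V E ident X s s')"
    and b: "is_cand V s c' \<and> stat s c' = Leader"
  have g: "good V s"
  proof -
    have "(step V E ident X)\<^sup>*\<^sup>* init s" using a by blast
    then show ?thesis
    proof (induction rule: rtranclp_induct)
      case base then show ?case using good_init[OF finV] .
    next
      case (step y z) then show ?case using step_good[OF _ _ finV inV connected] by blast
    qed
  qed
  then show "\<forall>v\<in>V. cand s v = c'" using b unfolding good_def by blast
qed

end
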